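(* Let $r>0$, $R_0>r$, $V_T>0$ and $\Delta V>0$, and put $V_s=\frac{2\pi R_0V_T}{r}+V_T+\Delta V$. Define a sequence by $R_0$ (the given initial radius) and $$R_{i+1}=R_i-\frac{r(V_s-V_T)-2\pi R_iV_T}{V_s+V_T}\quad(i\ge 0),$$ and put $T_{in_i}=\frac{r(V_s-V_T)-2\pi R_iV_T}{V_s(V_s+V_T)}$. Let $N=\min\{n\ge 0: R_n\le r\}$. Define $$T_{in}=\sum_{i=0}^{N-2}T_{in_i}+\frac{R_N}{V_s},\qquad T_{circular}=\sum_{i=0}^{N-1}\frac{2\pi R_i}{V_s}+\frac{2\pi r}{V_s},$$ and $T=T_{circular}+T_{in}$. Then $$N=\left\lceil\frac{\ln\left(\frac{2\pi rV_T-r(V_s-V_T)}{2\pi R_0V_T-r(V_s-V_T)}\right)}{\ln\left(1+\frac{2\pi V_T}{V_s+V_T}\right)}\right\rceil,$$ $$T_{in}=\frac{R_0}{V_s}+\left(1+\frac{2\pi V_T}{V_s+V_T}\right)^{N-1}\frac{2\pi R_0V_T-r(V_s-V_T)}{V_s(V_s+V_T)},$$ and $$T_{circular}=-\frac{R_0(V_s+V_T)}{V_sV_T}+\frac{r(V_s-V_T)(V_s+V_T+2\pi V_TN)}{2\pi V_sV_T^2}+\left(1+\frac{2\pi V_T}{V_s+V_T}\right)^{N}\frac{2\pi R_0V_T-r(V_s-V_T)}{V_sV_T}\cdot\frac{V_s+V_T}{2\pi V_T}+\frac{2\pi r}{V_s}.$$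
   Context: This models a circular sweep process. Evaders, with maximal speed $V_T$, start in a disk of radius $R_0$. A line formation with sensor length $2r$, moving at speed $V_s=V_c+\Delta V$ with critical speed $V_c=2\pi R_0V_T/r+V_T$, repeatedly circles the evader region and then steps inward. $R_i$ is the radius of the circle bounding the evader region after $i$ sweeps. $T_{in_i}$ is the duration of the $i$-th inward advancement. $N$ is the number of iterations needed to reduce the evader region to a disk of radius at most $r$. $T_{in}$ is the total inward-advancement time, which includes a final inward move of duration $R_N/V_s$. $T_{circular}$ is the total time of the circular traversals, which includes a final circular sweep of radius $r$. *)

theory Defs
  imports Complex_Main
begin

end

theory Submission
  imports Defs
begin

theorem theorem6:
  fixes r R0 VT dV Vs Tin Tcirc :: real
    and R :: "nat \<Rightarrow> real" and Tini :: "nat \<Rightarrow> real" and N :: nat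
  assumes hr: "r > 0" and hR0: "R0 > r" and hVT: "VT > 0" and hdV: "dV > 0"
    and hVs: "Vs = 2 * pi * R0 * VT / r + VT + dV"
    and hR_0: "R 0 = R0"
    and hR_Suc: "\<And>i. R (Suc i) = R i - (r * (Vs - VT) - 2 * pi * R i * VT) / (Vs + VT)"
    and hTini: "\<And>i. Tini i = (r * (Vs - VT) - 2 * pi * R i * VT) / (Vs * (Vs + VT))"
    and hN: "N = (LEAST n. R n \<le> r)"
    and hTin: "Tin = (\<Sum>i<N - 1. Tini i) + R N / Vs"
    and hTcirc: "Tcirc = (\<Sum>i<N. 2 * pi * R i / Vs) + 2 * pi * r / Vs"
  shows "int N = \<lceil>ln ((2 * pi * r * VT - r * (Vs - VT)) / (2 * pi * R0 * VT - r * (Vs - VT)))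
                    / ln (1 + 2 * pi * VT / (Vs + VT))\<rceil>
    \<and> Tin = R0 / Vs + (1 + 2 * pi * VT / (Vs + VT)) ^ (N - 1)
                 * (2 * pi * R0 * VT - r * (Vs - VT)) / (Vs * (Vs + VT))
    \<and> Tcirc = - (R0 * (Vs + VT) / (Vs * VT))
                 + r * (Vs - VT) * (Vs + VT + 2 * pi * VT * real N) / (2 * pi * Vs * VT ^ 2)
                 + (1 + 2 * pi * VT / (Vs + VT)) ^ N * (2 * pi * R0 * VT - r * (Vs - VT)) / (Vs * VT)
                   * ((Vs + VT) / (2 * pi * VT))
                 + 2 * pi * r / Vs"
proof -
  define q where "q = 1 + 2 * pi * VT / (Vs + VT)"
  define Rs where "Rs = r * (Vs - VT) / (2 * pi * VT)"
  define A where "A = Rs - R0"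
  have pi0: "pi > 0" by (rule pi_gt_zero)
  have Vsgt: "Vs - VT > 2 * pi * R0 * VT / r" using hVs hdV by simp
  have R0pos: "R0 > 0" using hr hR0 by simp
  have Vs0: "Vs > 0" using Vsgt hVT pi0 R0pos hr
    by (smt (verit) divide_pos_pos mult_pos_pos)
  have VV0: "Vs + VT > 0" using Vs0 hVT by simp
  have key: "r * (Vs - VT) > 2 * pi * R0 * VT"
    using Vsgt hr by (simp add: pos_divide_less_eq mult.commute)
  have A0: "A > 0" unfolding A_def Rs_def using key pi0 hVT
    by (simp add: pos_less_divide_eq mult_ac)
  have rsG: "2 * pi * VT * Rs = r * (Vs - VT)" unfolding Rs_def using pi0 hVT by simp
  have q1: "q > 1" unfolding q_def using pi0 hVT VV0 by simp
  have qm1: "q - 1 = 2 * pi * VT / (Vs + VT)" unfolding q_def by simp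
  have qm1: "q - 1 = 2 * pi * VT / (Vs + VT)" unfolding q_def by simp
  have step: "R (Suc i) = q * R i - (q - 1) * Rs" for i
    proof -
    have nz: "pi \<noteq> 0" "VT \<noteq> 0" "Vs + VT \<noteq> 0" "VT + Vs \<noteq> 0" using pi0 hVT VV0 by auto
    have e1: "(q - 1) * Rs = r * (Vs - VT) / (Vs + VT)"
      unfolding qm1 Rs_def using nz by (simp add: divide_simps)
    have e2: "(q - 1) * R i = 2 * pi * R i * VT / (Vs + VT)"
      unfolding qm1 by (simp add: algebra_simps)
    have "q * R i - (q - 1) * Rs = R i + (q - 1) * R i - (q - 1) * Rs" by (simp add: algebra_simps)
    also have "\<dots> = R i - (r * (Vs - VT) - 2 * pi * R i * VT) / (Vs + VT)"
      unfolding e1 e2 by (simp add: diff_divide_distrib)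
    finally show ?thesis using hR_Suc[of i] by simp
  qed
  have closed: "R n = Rs - q ^ n * A" for n
  proof (induction n)
    case 0 then show ?case using hR_0 A_def by simp
  next
    case (Suc n)
    show ?case unfolding step Suc.IH by (simp add: algebra_simps)
  qed
  define x where "x = ln ((2 * pi * r * VT - r * (Vs - VT)) / (2 * pi * R0 * VT - r * (Vs - VT))) / ln q"
  have ratio: "(2 * pi * r * VT - r * (Vs - VT)) / (2 * pi * R0 * VT - r * (Vs - VT)) = (Rs - r) / A"
  proof -
    have c: "2 * pi * VT \<noteq> 0" using pi0 hVT by simp
    have rs: "2 * pi * VT * Rs = r * (Vs - VT)" unfolding Rs_def using c by simp
    have n1: "2 * pi * r * VT - r * (Vs - VT) = (- (2 * pi * VT)) * (Rs - r)"
      using rs by (simp add: algebra_simps)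
    have n2: "2 * pi * R0 * VT - r * (Vs - VT) = (- (2 * pi * VT)) * A"
      unfolding A_def using rs by (simp add: algebra_simps)
    show ?thesis unfolding n1 n2 using c by simp
  qed
  have ratio1: "(Rs - r) / A > 1" using A0 hR0 unfolding A_def by simp
  have lnq: "ln q > 0" using q1 by simp
  have x0: "x > 0" unfolding x_def ratio using ratio1 lnq by simp
  have iff: "R n \<le> r \<longleftrightarrow> x \<le> real n" for n
  proof -
    have "R n \<le> r \<longleftrightarrow> (Rs - r) / A \<le> q ^ n" unfolding closed using A0
      by (simp add: pos_divide_le_eq algebra_simps)
    also have "\<dots> \<longleftrightarrow> ln ((Rs - r) / A) \<le> ln (q ^ n)"
      using ratio1 q1 by (subst ln_le_cancel_iff) auto
    also have "\<dots> \<longleftrightarrow> ln ((Rs - r) / A) \<le> real n * ln q"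
      using q1 by (simp add: ln_realpow)
    also have "\<dots> \<longleftrightarrow> x \<le> real n" unfolding x_def ratio using lnq
      by (simp add: pos_divide_le_eq)
    finally show ?thesis .
  qed
  have Neq: "N = nat \<lceil>x\<rceil>"
    unfolding hN
  proof (rule Least_equality)
    have "real (nat \<lceil>x\<rceil>) = of_int \<lceil>x\<rceil>" using x0 by simp
    then have "x \<le> real (nat \<lceil>x\<rceil>)" by (simp add: le_of_int_ceiling)
    then show "R (nat \<lceil>x\<rceil>) \<le> r" using iff by simp
    show "\<And>y. R y \<le> r \<Longrightarrow> nat \<lceil>x\<rceil> \<le> y" using iff
      by (simp add: ceiling_le nat_le_iff)
  qed
  have "\<lceil>x\<rceil> > 0" using x0 by simp
  then have N1: "N \<ge> 1" using Neq by linarith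
  have part1: "int N = \<lceil>x\<rceil>" using Neq x0 by simp
  have telesc: "(\<Sum>i<m. Tini i) = (R0 - R m) / Vs" for m
  proof (induction m)
    case 0 then show ?case using hR_0 by simp
  next
    case (Suc m)
    have "Tini m = (R m - R (Suc m)) / Vs" unfolding hTini[of m] hR_Suc[of m]
      by (simp add: divide_divide_eq_left mult.commute)
    then show ?case using Suc by (simp add: add_divide_distrib[symmetric])
  qed
  have sumR: "(\<Sum>i<n. R i) = real n * Rs - A * (q ^ n - 1) / (q - 1)" for n
  proof (induction n)
    case 0 then show ?case by simp
  next
    case (Suc n)
    have "q - 1 \<noteq> 0" using q1 by simp
    then show ?case unfolding sum.lessThan_Suc Suc.IH closed[of n] by (simp add: field_simps)
  qed
  obtain M where M: "N = Suc M" using N1 by (cases N) auto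
  have qA: "(q - 1) * A = - (2 * pi * R0 * VT - r * (Vs - VT)) / (Vs + VT)"
  proof -
    have "(q - 1) * A = (2 * pi * VT * Rs - 2 * pi * VT * R0) / (Vs + VT)"
      unfolding qm1 A_def by (simp add: algebra_simps)
    then show ?thesis unfolding rsG by (simp add: algebra_simps)
  qed
  have dif: "R (Suc M) - R M = - (q ^ M * ((q - 1) * A))" unfolding closed by (simp add: algebra_simps)
  have part2: "Tin = R0 / Vs + q ^ (N - 1) * (2 * pi * R0 * VT - r * (Vs - VT)) / (Vs * (Vs + VT))"
  proof -
    have "Tin = R0 / Vs + (R (Suc M) - R M) / Vs" unfolding hTin telesc M by (simp add: diff_divide_distrib)
    also have "\<dots> = R0 / Vs + q ^ (N - 1) * (2 * pi * R0 * VT - r * (Vs - VT)) / (Vs * (Vs + VT))"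
    proof -
      have g: "- (Q * (- E / (Vs + VT))) / Vs = Q * E / (Vs * (Vs + VT))" for Q E
        using Vs0 VV0 by (simp add: field_simps)
      show ?thesis unfolding dif qA M by (simp only: g diff_Suc_1)
    qed
    finally show ?thesis .
  qed
  have sc: "(\<Sum>i<N. 2 * pi * R i / Vs) = 2 * pi / Vs * (\<Sum>i<N. R i)"
    by (simp add: sum_distrib_left)
  have part3: "Tcirc = - (R0 * (Vs + VT) / (Vs * VT))
                 + r * (Vs - VT) * (Vs + VT + 2 * pi * VT * real N) / (2 * pi * Vs * VT ^ 2)
                 + q ^ N * (2 * pi * R0 * VT - r * (Vs - VT)) / (Vs * VT)
                   * ((Vs + VT) / (2 * pi * VT))
                 + 2 * pi * r / Vs"
    unfolding hTcirc sc sumR qm1 using Vs0 VV0 pi0 hVT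
    unfolding A_def Rs_def by (simp add: field_simps power2_eq_square)
  show ?thesis using part1 part2 part3 unfolding x_def q_def by simp
qed

end
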